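(* Let $R$ be a commutative ring with unit, $I$ an ideal of $R$, and $M$ an $R$-module. (1) If $I$ is principal, then $H_R(I,M)=0$. (2) If $R$ is an integral domain and $M$ is torsion-free, then $H_R(I,M)=0$. (3) If $R$ is a Dedekind domain, then $H_R(I,M)=0$. (4) If $R$ is a reduced ring with finitely many minimal prime ideals (in particular, a reduced noetherian ring), then $H_R(I,R)=0$.
   Context: $Z_R(I,M)=\{\varphi\in\mathrm{Hom}_R(I,M):\varphi(t)\in tM\text{ for all }t\in I\}$; $B_R(I,M)$ is the submodule of $\varphi\in Z_R(I,M)$ for which there exists $m\in M$ with $\varphi(t)=tm$ for all $t\in I$; $H_R(I,M)=Z_R(I,M)/B_R(I,M)$. *)

theory Defs
  imports "HOL-Algebra.Algebra"
begin

definition Hom_ideal :: "('a, 'c) ring_scheme \<Rightarrow> 'a set \<Rightarrow> ('a, 'b, 'd) module_scheme \<Rightarrow> ('a \<Rightarrow> 'b) set"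
  where "Hom_ideal R I M =
    {\<phi> \<in> I \<rightarrow>\<^sub>E carrier M.
       (\<forall>x\<in>I. \<forall>y\<in>I. \<phi> (x \<oplus>\<^bsub>R\<^esub> y) = \<phi> x \<oplus>\<^bsub>M\<^esub> \<phi> y) \<and>
       (\<forall>r\<in>carrier R. \<forall>x\<in>I. \<phi> (r \<otimes>\<^bsub>R\<^esub> x) = r \<odot>\<^bsub>M\<^esub> \<phi> x)}"

definition Z_R :: "('a, 'c) ring_scheme \<Rightarrow> 'a set \<Rightarrow> ('a, 'b, 'd) module_scheme \<Rightarrow> ('a \<Rightarrow> 'b) set"
  where "Z_R R I M = {\<phi> \<in> Hom_ideal R I M. \<forall>t\<in>I. \<exists>m\<in>carrier M. \<phi> t = t \<odot>\<^bsub>M\<^esub> m}"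

definition B_R :: "('a, 'c) ring_scheme \<Rightarrow> 'a set \<Rightarrow> ('a, 'b, 'd) module_scheme \<Rightarrow> ('a \<Rightarrow> 'b) set"
  where "B_R R I M = {\<phi> \<in> Z_R R I M. \<exists>m\<in>carrier M. \<forall>t\<in>I. \<phi> t = t \<odot>\<^bsub>M\<^esub> m}"

text \<open>H_R(I,M) = Z_R(I,M)/B_R(I,M) is zero iff B_R(I,M) = Z_R(I,M).\<close>
definition H_R_zero :: "('a, 'c) ring_scheme \<Rightarrow> 'a set \<Rightarrow> ('a, 'b, 'd) module_scheme \<Rightarrow> bool"
  where "H_R_zero R I M \<longleftrightarrow> Z_R R I M = B_R R I M"

definition self_module :: "'a ring \<Rightarrow> ('a, 'a) module"
  where "self_module R = ring.extend R \<lparr>smult = monoid.mult R\<rparr>"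

definition torsion_free :: "('a, 'c) ring_scheme \<Rightarrow> ('a, 'b, 'd) module_scheme \<Rightarrow> bool"
  where "torsion_free R M \<longleftrightarrow>
    (\<forall>r\<in>carrier R. \<forall>m\<in>carrier M. r \<odot>\<^bsub>M\<^esub> m = \<zero>\<^bsub>M\<^esub> \<longrightarrow> r = \<zero>\<^bsub>R\<^esub> \<or> m = \<zero>\<^bsub>M\<^esub>)"

text \<open>Integrally closed domain: every element a/b (b \<noteq> 0) of the fraction field that is
  integral over R lies in R.  Clearing denominators: if a^n + sum c_i a^i b^(n-i) = 0 then b | a.\<close>
definition integrally_closed :: "('a, 'c) ring_scheme \<Rightarrow> bool"
  where "integrally_closed R \<longleftrightarrow>
    (\<forall>a\<in>carrier R. \<forall>b\<in>carrier R - {\<zero>\<^bsub>R\<^esub>}. \<forall>n::nat. \<forall>c.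
       n \<ge> 1 \<and> c \<in> {..<n} \<rightarrow> carrier R \<and>
       a [^]\<^bsub>R\<^esub> n \<oplus>\<^bsub>R\<^esub>
         (\<Oplus>\<^bsub>R\<^esub>i\<in>{..<n}. c i \<otimes>\<^bsub>R\<^esub> a [^]\<^bsub>R\<^esub> i \<otimes>\<^bsub>R\<^esub> b [^]\<^bsub>R\<^esub> (n - i)) = \<zero>\<^bsub>R\<^esub>
       \<longrightarrow> (\<exists>x\<in>carrier R. a = b \<otimes>\<^bsub>R\<^esub> x))"

definition dedekind_domain :: "('a, 'c) ring_scheme \<Rightarrow> bool"
  where "dedekind_domain R \<longleftrightarrow>
    noetherian_domain R \<and> integrally_closed R \<and>
    (\<forall>P. primeideal P R \<and> P \<noteq> {\<zero>\<^bsub>R\<^esub>} \<longrightarrow> maximalideal P R)"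

definition reduced_ring :: "('a, 'c) ring_scheme \<Rightarrow> bool"
  where "reduced_ring R \<longleftrightarrow>
    (\<forall>x\<in>carrier R. \<forall>n::nat. x [^]\<^bsub>R\<^esub> n = \<zero>\<^bsub>R\<^esub> \<longrightarrow> x = \<zero>\<^bsub>R\<^esub>)"

definition minimal_prime :: "'a set \<Rightarrow> ('a, 'c) ring_scheme \<Rightarrow> bool"
  where "minimal_prime P R \<longleftrightarrow>
    primeideal P R \<and> (\<forall>Q. primeideal Q R \<and> Q \<subseteq> P \<longrightarrow> Q = P)"

end

theory Submission
  imports Defs
begin


lemma (in cring) idealI_simple:
  assumes "S \<subseteq> carrier R" "\<zero> \<in> S" "\<And>x y. x \<in> S \<Longrightarrow> y \<in> S \<Longrightarrow> x \<oplus> y \<in> S"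
    "\<And>r x. r \<in> carrier R \<Longrightarrow> x \<in> S \<Longrightarrow> r \<otimes> x \<in> S"
  shows "ideal S R"
proof (rule idealI[OF ring_axioms])
  show "subgroup S (add_monoid R)"
  proof (rule subgroup.intro)
    fix x assume x: "x \<in> S"
    have xc: "x \<in> carrier R" using x assms(1) by auto
    have "inv\<^bsub>add_monoid R\<^esub> x = (\<ominus> \<one>) \<otimes> x"
      using xc by (simp add: a_inv_def[symmetric] l_minus)
    thus "inv\<^bsub>add_monoid R\<^esub> x \<in> S" using assms(4)[OF _ x] by simp
  qed (use assms in auto)
next
  fix a x assume "a \<in> S" "x \<in> carrier R"
  thus "x \<otimes> a \<in> S" using assms(4) by auto
  thus "a \<otimes> x \<in> S" using \<open>a \<in> S\<close> \<open>x \<in> carrier R\<close> assms(1) m_comm by auto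
qed

lemma (in cring) sum_prin:
  assumes "ideal Q R" "a \<in> carrier R"
  shows "ideal (Q <+>\<^bsub>R\<^esub> PIdl a) R" "Q \<subseteq> Q <+>\<^bsub>R\<^esub> PIdl a" "a \<in> Q <+>\<^bsub>R\<^esub> PIdl a"
    "u \<in> Q <+>\<^bsub>R\<^esub> PIdl a \<Longrightarrow> \<exists>q\<in>Q. \<exists>r\<in>carrier R. u = q \<oplus> r \<otimes> a"
proof -
  interpret ideal Q R by fact
  show "ideal (Q <+>\<^bsub>R\<^esub> PIdl a) R" by (rule add_ideals[OF assms(1) cgenideal_ideal[OF assms(2)]])
  show "Q \<subseteq> Q <+>\<^bsub>R\<^esub> PIdl a"
  proof
    fix q assume q: "q \<in> Q"
    have "q = q \<oplus> \<zero> \<otimes> a" using q Icarr assms(2) by simp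
    moreover have "\<zero> \<otimes> a \<in> PIdl a" unfolding cgenideal_def by blast
    ultimately show "q \<in> Q <+>\<^bsub>R\<^esub> PIdl a" unfolding set_add_def' using q by blast
  qed
  have "a = \<zero> \<oplus> \<one> \<otimes> a" using assms(2) by simp
  moreover have "\<one> \<otimes> a \<in> PIdl a" unfolding cgenideal_def by blast
  ultimately show "a \<in> Q <+>\<^bsub>R\<^esub> PIdl a" unfolding set_add_def' using additive_subgroup.zero_closed[OF is_additive_subgroup] by blast
  show "u \<in> Q <+>\<^bsub>R\<^esub> PIdl a \<Longrightarrow> \<exists>q\<in>Q. \<exists>r\<in>carrier R. u = q \<oplus> r \<otimes> a"
    unfolding set_add_def' cgenideal_def by blast
qed

lemma (in cring) sum_prin_prod:
  assumes "ideal Q R" "a \<in> carrier R" "b \<in> carrier R" "a \<otimes> b \<in> Q"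
    "u \<in> Q <+>\<^bsub>R\<^esub> PIdl a" "v \<in> Q <+>\<^bsub>R\<^esub> PIdl b"
  shows "u \<otimes> v \<in> Q"
proof -
  interpret ideal Q R by fact
  obtain q1 r where q1: "q1 \<in> Q" "r \<in> carrier R" "u = q1 \<oplus> r \<otimes> a" using sum_prin(4)[OF assms(1,2,5)] by blast
  obtain q2 s where q2: "q2 \<in> Q" "s \<in> carrier R" "v = q2 \<oplus> s \<otimes> b" using sum_prin(4)[OF assms(1,3,6)] by blast
  have c: "q1 \<in> carrier R" "q2 \<in> carrier R" using q1 q2 Icarr by auto
  define x where "x = r \<otimes> a"
  define y where "y = s \<otimes> b"
  have xy: "x \<in> carrier R" "y \<in> carrier R" using q1 q2 assms(2,3) by (auto simp: x_def y_def)
  have "x \<otimes> y = (r \<otimes> s) \<otimes> (a \<otimes> b)" unfolding x_def y_def using q1 q2 assms(2,3)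
    by (simp add: m_ac)
  hence xyQ: "x \<otimes> y \<in> Q" using I_l_closed[OF assms(4)] q1 q2 by simp
  have "u \<otimes> v = q1 \<otimes> q2 \<oplus> x \<otimes> q2 \<oplus> (q1 \<otimes> y \<oplus> x \<otimes> y)"
    unfolding q1(3) q2(3) x_def[symmetric] y_def[symmetric] using c xy by (simp add: l_distr r_distr)
  moreover have "q1 \<otimes> q2 \<in> Q" "q1 \<otimes> y \<in> Q" using I_r_closed[OF q1(1)] c xy by auto
  moreover have "x \<otimes> q2 \<in> Q" using I_l_closed[OF q2(1) xy(1)] .
  ultimately show ?thesis using xyQ a_closed by simp
qed

lemma (in cring) prime_avoiding_powers:
  assumes d: "d \<in> carrier R" and np: "\<forall>n::nat. d [^] n \<noteq> \<zero>"
  shows "\<exists>Q. primeideal Q R \<and> d \<notin> Q"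
proof -
  define A where "A = {J. ideal J R \<and> (\<forall>n::nat. d [^] n \<notin> J)}"
  have "\<exists>Mx\<in>A. \<forall>Xx\<in>A. Mx \<subseteq> Xx \<longrightarrow> Xx = Mx"
  proof (rule subset_Zorn)
    fix C assume C: "subset.chain A C"
    show "\<exists>Ux\<in>A. \<forall>Xx\<in>C. Xx \<subseteq> Ux"
    proof (cases "C = {}")
      case True
      have "{\<zero>} \<in> A" unfolding A_def using zeroideal np by auto
      thus ?thesis using True by blast
    next
      case False
      have ch: "subset.chain {I. ideal I R} C" using C unfolding A_def pred_on.chain_def by auto
      have "ideal (\<Union>C) R" using chain_Union_is_ideal[OF ch] False by simp
      moreover have "\<forall>n::nat. d [^] n \<notin> \<Union>C" using C unfolding A_def pred_on.chain_def by auto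
      ultimately show ?thesis unfolding A_def by blast
    qed
  qed
  then obtain Q where Q: "Q \<in> A" "\<And>X1. X1 \<in> A \<Longrightarrow> Q \<subseteq> X1 \<Longrightarrow> X1 = Q" by blast
  have iQ: "ideal Q R" and nQ: "\<And>n::nat. d [^] n \<notin> Q" using Q(1) unfolding A_def by auto
  have "primeideal Q R"
  proof (rule primeidealI[OF iQ is_cring])
    show "carrier R \<noteq> Q" using nQ[of 0] by auto
    fix a b assume ab: "a \<in> carrier R" "b \<in> carrier R" "a \<otimes> b \<in> Q"
    show "a \<in> Q \<or> b \<in> Q"
    proof (rule ccontr)
      assume "\<not> (a \<in> Q \<or> b \<in> Q)"
      hence na: "a \<notin> Q" "b \<notin> Q" by auto
      have "(Q <+>\<^bsub>R\<^esub> PIdl a) \<notin> A"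
        using Q(2)[of "Q <+>\<^bsub>R\<^esub> PIdl a"] sum_prin[OF iQ ab(1)] na by auto
      then obtain i::nat where i: "d [^] i \<in> Q <+>\<^bsub>R\<^esub> PIdl a" using sum_prin(1)[OF iQ ab(1)] unfolding A_def by auto
      have "(Q <+>\<^bsub>R\<^esub> PIdl b) \<notin> A"
        using Q(2)[of "Q <+>\<^bsub>R\<^esub> PIdl b"] sum_prin[OF iQ ab(2)] na by auto
      then obtain j::nat where j: "d [^] j \<in> Q <+>\<^bsub>R\<^esub> PIdl b" using sum_prin(1)[OF iQ ab(2)] unfolding A_def by auto
      have "d [^] i \<otimes> d [^] j \<in> Q" using sum_prin_prod[OF iQ ab i j] .
      hence "d [^] (i + j) \<in> Q" using d by (simp add: nat_pow_mult)
      thus False using nQ by blast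
    qed
  qed
  moreover have "d \<notin> Q" using nQ[of 1] d by simp
  ultimately show ?thesis by blast
qed

lemma (in cring) exists_minimal_prime:
  assumes "primeideal Q R"
  shows "\<exists>P. minimal_prime P R \<and> P \<subseteq> Q"
proof -
  define Sp where "Sp = {P. primeideal P R \<and> P \<subseteq> Q}"
  define A where "A = uminus ` Sp"
  have "\<exists>Mx\<in>A. \<forall>Xx\<in>A. Mx \<subseteq> Xx \<longrightarrow> Xx = Mx"
  proof (rule subset_Zorn)
    fix C assume C: "subset.chain A C"
    show "\<exists>Ux\<in>A. \<forall>Xx\<in>C. Xx \<subseteq> Ux"
    proof (cases "C = {}")
      case True
      have "- Q \<in> A" unfolding A_def Sp_def using assms by auto
      thus ?thesis using True by blast
    next
      case False
      define D where "D = uminus ` C"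
      have DS: "D \<subseteq> Sp" using C unfolding D_def A_def pred_on.chain_def by auto
      have Dch: "\<And>X1 Y1. X1 \<in> D \<Longrightarrow> Y1 \<in> D \<Longrightarrow> X1 \<subseteq> Y1 \<or> Y1 \<subseteq> X1"
        using C unfolding D_def pred_on.chain_def by auto
      have Dne: "D \<noteq> {}" using False D_def by auto
      have pr: "\<And>P. P \<in> D \<Longrightarrow> primeideal P R" using DS Sp_def by auto
      have "primeideal (\<Inter>D) R"
      proof (rule primeidealI[OF i_Intersect is_cring])
        show "\<And>I. I \<in> D \<Longrightarrow> ideal I R" using pr primeideal.axioms(1) by blast
        show "D \<noteq> {}" by fact
        show "carrier R \<noteq> \<Inter>D"
        proof
          assume "carrier R = \<Inter>D"
          then obtain P where "P \<in> D" "carrier R \<subseteq> P" using Dne by auto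
          thus False using pr[of P] primeideal.I_notcarr[of P R] primeideal.axioms(1)[of P R]
            ideal.Icarr[of P R] by auto
        qed
        fix a b assume ab: "a \<in> carrier R" "b \<in> carrier R" "a \<otimes> b \<in> \<Inter>D"
        show "a \<in> \<Inter>D \<or> b \<in> \<Inter>D"
        proof (rule ccontr)
          assume "\<not> (a \<in> \<Inter>D \<or> b \<in> \<Inter>D)"
          then obtain P1 P2 where P: "P1 \<in> D" "a \<notin> P1" "P2 \<in> D" "b \<notin> P2" by auto
          have "a \<otimes> b \<in> P1" "a \<otimes> b \<in> P2" using ab P by auto
          hence "b \<in> P1" "a \<in> P2" using primeideal.I_prime[OF pr[OF P(1)] ab(1,2)] 
              primeideal.I_prime[OF pr[OF P(3)] ab(1,2)] P by auto
          thus False using Dch[OF P(1) P(3)] P by auto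
        qed
      qed
      moreover have "\<Inter>D \<subseteq> Q" using DS Dne Sp_def by auto
      ultimately have "- \<Inter>D \<in> A" unfolding A_def Sp_def by auto
      moreover have "\<forall>Xx\<in>C. Xx \<subseteq> - \<Inter>D" unfolding D_def by auto
      ultimately show ?thesis by blast
    qed
  qed
  then obtain M where M: "M \<in> A" "\<And>X1. X1 \<in> A \<Longrightarrow> M \<subseteq> X1 \<Longrightarrow> X1 = M" by blast
  obtain P where P: "P \<in> Sp" "M = - P" using M(1) A_def by auto
  have "minimal_prime P R" unfolding minimal_prime_def
  proof (intro conjI allI impI)
    show "primeideal P R" using P Sp_def by auto
    fix Q' assume "primeideal Q' R \<and> Q' \<subseteq> P"
    hence "- Q' \<in> A" "M \<subseteq> - Q'" using P unfolding A_def Sp_def by auto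
    hence "- Q' = - P" using M(2) P by auto
    thus "Q' = P" by simp
  qed
  thus ?thesis using P Sp_def by auto
qed

lemma (in cring) reduced_inter:
  assumes "reduced_ring R" "d \<in> carrier R" "\<And>P. minimal_prime P R \<Longrightarrow> d \<in> P"
  shows "d = \<zero>"
proof (rule ccontr)
  assume "d \<noteq> \<zero>"
  hence "\<forall>n::nat. d [^] n \<noteq> \<zero>" using assms(1,2) unfolding reduced_ring_def by auto
  then obtain Q where Q: "primeideal Q R" "d \<notin> Q" using prime_avoiding_powers assms(2) by blast
  then obtain P where "minimal_prime P R" "P \<subseteq> Q" using exists_minimal_prime by blast
  thus False using assms(3) Q by auto
qed

lemma (in cring) min_primes_sep:
  assumes "finite G" "\<forall>Q\<in>G. minimal_prime Q R" "minimal_prime P0 R" "P0 \<notin> G"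
  shows "\<exists>y\<in>carrier R. y \<notin> P0 \<and> (\<forall>Q\<in>G. y \<in> Q)"
  using assms
proof (induction G rule: finite_induct)
  case empty
  have pr: "primeideal P0 R" using empty.prems(2) unfolding minimal_prime_def by blast
  have "\<one> \<notin> P0"
  proof
    assume "\<one> \<in> P0"
    hence "P0 = carrier R" by (rule ideal.one_imp_carrier[OF primeideal.axioms(1)[OF pr]])
    thus False using primeideal.I_notcarr[OF pr] by simp
  qed
  thus ?case by blast
next
  case (insert Q G)
  have prems: "\<forall>Q'\<in>G. minimal_prime Q' R" "minimal_prime Q R" "minimal_prime P0 R" "P0 \<notin> G" "P0 \<noteq> Q"
    using insert.prems by auto
  obtain y where y: "y \<in> carrier R" "y \<notin> P0" "\<forall>Q\<in>G. y \<in> Q"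
    using insert.IH[OF prems(1,3,4)] by blast
  have mQ: "minimal_prime Q R" by fact
  have pP: "primeideal P0 R" using prems(3) unfolding minimal_prime_def by blast
  have pQ: "primeideal Q R" using mQ unfolding minimal_prime_def by blast
  have "\<not> Q \<subseteq> P0"
  proof
    assume "Q \<subseteq> P0"
    hence "Q = P0" using prems(3) pQ unfolding minimal_prime_def by blast
    thus False using prems(5) by simp
  qed
  then obtain x where x: "x \<in> Q" "x \<notin> P0" by auto
  have xc: "x \<in> carrier R" using ideal.Icarr[OF primeideal.axioms(1)[OF pQ] x(1)] .
  have "x \<otimes> y \<notin> P0" using primeideal.I_prime[OF pP xc y(1)] x y by auto
  moreover have "\<forall>Q'\<in>insert Q G. x \<otimes> y \<in> Q'"
  proof
    fix Q' assume "Q' \<in> insert Q G"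
    moreover have "x \<otimes> y \<in> Q" using ideal.I_r_closed[OF primeideal.axioms(1)[OF pQ] x(1) y(1)] .
    moreover have "\<And>Q'. Q' \<in> G \<Longrightarrow> x \<otimes> y \<in> Q'"
    proof -
      fix Q' assume "Q' \<in> G"
      hence pr': "primeideal Q' R" using prems(1) unfolding minimal_prime_def by blast
      have "y \<in> Q'" using y(3) \<open>Q' \<in> G\<close> by blast
      thus "x \<otimes> y \<in> Q'" using ideal.I_l_closed[OF primeideal.axioms(1)[OF pr'] _ xc] by blast
    qed
    ultimately show "x \<otimes> y \<in> Q'" by auto
  qed
  ultimately show ?case using xc y by blast
qed

lemma (in cring) min_primes_avoid:
  assumes "ideal I R" "finite F" "\<forall>P\<in>F. minimal_prime P R"
  shows "\<exists>a\<in>I. \<forall>P\<in>F. \<not> I \<subseteq> P \<longrightarrow> a \<notin> P"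
  using assms(2,3)
proof (induction F rule: finite_induct)
  case empty
  show ?case using assms(1) additive_subgroup.zero_closed ideal.axioms(1) by fastforce
next
  case (insert P0 F)
  then obtain a where a: "a \<in> I" "\<forall>P\<in>F. \<not> I \<subseteq> P \<longrightarrow> a \<notin> P" by auto
  show ?case
  proof (cases "I \<subseteq> P0 \<or> a \<notin> P0")
    case True thus ?thesis using a by blast
  next
    case False
    then obtain a0 where a0: "a0 \<in> I" "a0 \<notin> P0" and aP: "a \<in> P0" by auto
    obtain y where y: "y \<in> carrier R" "y \<notin> P0" "\<forall>Q\<in>F. y \<in> Q"
    proof -
      have "\<forall>Q\<in>F. minimal_prime Q R" "minimal_prime P0 R" using insert.prems by auto
      thus ?thesis using min_primes_sep[OF insert(1) _ _ insert(2)] that by blast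
    qed
    have pP: "primeideal P0 R" using insert(4) minimal_prime_def by auto
    have ac: "a \<in> carrier R" "a0 \<in> carrier R" using a a0 ideal.Icarr[OF assms(1)] by auto
    have ya0: "y \<otimes> a0 \<notin> P0" using primeideal.I_prime[OF pP y(1) ac(2)] y a0 by auto
    define a' where "a' = a \<oplus> y \<otimes> a0"
    have "a' \<in> I" unfolding a'_def using a a0 y ideal.I_l_closed[OF assms(1)] 
        additive_subgroup.a_closed[OF ideal.axioms(1)[OF assms(1)]] by auto
    moreover have "a' \<notin> P0"
    proof
      assume "a' \<in> P0"
      hence "\<ominus> a \<oplus> a' \<in> P0" using aP additive_subgroup.a_closed[OF ideal.axioms(1)[OF primeideal.axioms(1)[OF pP]]]
        additive_subgroup.a_inv_closed[OF ideal.axioms(1)[OF primeideal.axioms(1)[OF pP]]] by auto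
      moreover have "\<ominus> a \<oplus> a' = y \<otimes> a0" unfolding a'_def using ac y by (simp add: a_assoc[symmetric] l_neg)
      ultimately show False using ya0 by simp
    qed
    moreover have "\<forall>P\<in>F. \<not> I \<subseteq> P \<longrightarrow> a' \<notin> P"
    proof (intro ballI impI notI)
      fix P assume P: "P \<in> F" "\<not> I \<subseteq> P" "a' \<in> P"
      have iP: "ideal P R" using insert.prems P(1) primeideal.axioms(1) unfolding minimal_prime_def by blast
      have "y \<otimes> a0 \<in> P" using y(3) P(1) ideal.I_r_closed[OF iP] ac by auto
      hence "a' \<oplus> \<ominus> (y \<otimes> a0) \<in> P" using P(3) additive_subgroup.a_closed[OF ideal.axioms(1)[OF iP]]
        additive_subgroup.a_inv_closed[OF ideal.axioms(1)[OF iP]] by auto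
      moreover have "a' \<oplus> \<ominus> (y \<otimes> a0) = a" unfolding a'_def using ac y by (simp add: a_assoc r_neg)
      ultimately show False using a(2) P by auto
    qed
    ultimately show ?thesis by blast
  qed
qed

lemma sm: "carrier (self_module R) = carrier R" "x \<odot>\<^bsub>self_module R\<^esub> y = x \<otimes>\<^bsub>R\<^esub> y"
  "x \<oplus>\<^bsub>self_module R\<^esub> y = x \<oplus>\<^bsub>R\<^esub> y" "\<zero>\<^bsub>self_module R\<^esub> = \<zero>\<^bsub>R\<^esub>"
  by (simp_all add: self_module_def ring.defs)

lemma H_zeroI:
  assumes "\<And>\<phi>. \<phi> \<in> Z_R R I M \<Longrightarrow> \<exists>m\<in>carrier M. \<forall>t\<in>I. \<phi> t = t \<odot>\<^bsub>M\<^esub> m"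
  shows "H_R_zero R I M"
  using assms unfolding H_R_zero_def B_R_def by auto

lemma ZD:
  assumes "\<phi> \<in> Z_R R I M"
  shows "\<And>t. t \<in> I \<Longrightarrow> \<phi> t \<in> carrier M"
    and "\<And>x y. x \<in> I \<Longrightarrow> y \<in> I \<Longrightarrow> \<phi> (x \<oplus>\<^bsub>R\<^esub> y) = \<phi> x \<oplus>\<^bsub>M\<^esub> \<phi> y"
    and "\<And>r x. r \<in> carrier R \<Longrightarrow> x \<in> I \<Longrightarrow> \<phi> (r \<otimes>\<^bsub>R\<^esub> x) = r \<odot>\<^bsub>M\<^esub> \<phi> x"
    and "\<And>t. t \<in> I \<Longrightarrow> \<exists>m\<in>carrier M. \<phi> t = t \<odot>\<^bsub>M\<^esub> m"
  using assms unfolding Z_R_def Hom_ideal_def by auto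

lemma part4:
  fixes R :: "'a ring" (structure)
  assumes "cring R" "ideal I R" "reduced_ring R" "finite {P. minimal_prime P R}"
  shows "H_R_zero R I (self_module R)"
proof (rule H_zeroI)
  interpret cring R by fact
  interpret ideal I R by fact
  fix \<phi> assume Z: "\<phi> \<in> Z_R R I (self_module R)"
  note Z1 = ZD(1)[OF Z, unfolded sm] and Z3 = ZD(3)[OF Z, unfolded sm] and Z4 = ZD(4)[OF Z, unfolded sm]
  obtain a where a: "a \<in> I" "\<And>P. minimal_prime P R \<Longrightarrow> \<not> I \<subseteq> P \<Longrightarrow> a \<notin> P"
    using min_primes_avoid[OF assms(2,4)] by auto
  have ac: "a \<in> carrier R" using a Icarr by auto
  obtain m where m: "m \<in> carrier R" "\<phi> a = a \<otimes> m" using Z4[OF a(1)] by auto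
  show "\<exists>m\<in>carrier (self_module R). \<forall>t\<in>I. \<phi> t = t \<odot>\<^bsub>self_module R\<^esub> m"
    unfolding sm
  proof (intro bexI[OF _ m(1)] ballI)
    fix t assume t: "t \<in> I"
    have tc: "t \<in> carrier R" using t Icarr by auto
    have pt: "\<phi> t \<in> carrier R" using Z1[OF t] .
    define d where "d = \<phi> t \<ominus> t \<otimes> m"
    have dc: "d \<in> carrier R" unfolding d_def using pt tc m by simp
    have "a \<otimes> \<phi> t = \<phi> (a \<otimes> t)" using Z3[OF ac t] by simp
    also have "\<dots> = \<phi> (t \<otimes> a)" using ac tc m_comm by simp
    also have "\<dots> = t \<otimes> (a \<otimes> m)" using Z3[OF tc a(1)] m by simp
    also have "\<dots> = a \<otimes> (t \<otimes> m)" using ac tc m(1) m_lcomm by simp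
    finally have e: "a \<otimes> \<phi> t = a \<otimes> (t \<otimes> m)" .
    have ad: "a \<otimes> d = \<zero>" unfolding d_def minus_eq using e ac tc m(1) pt
      by (simp add: r_distr r_minus r_neg)
    have "d = \<zero>"
    proof (rule reduced_inter[OF assms(3) dc])
      fix P assume mP: "minimal_prime P R"
      hence pP: "primeideal P R" unfolding minimal_prime_def by auto
      interpret P: primeideal P R by fact
      show "d \<in> P"
      proof (cases "I \<subseteq> P")
        case True
        hence tP: "t \<in> P" using t by auto
        obtain r where r: "r \<in> carrier R" "\<phi> t = t \<otimes> r" using Z4[OF t] by auto
        have "\<phi> t \<in> P" using r P.I_r_closed[OF tP] by simp
        moreover have "\<ominus> (t \<otimes> m) \<in> P" using P.I_r_closed[OF tP m(1)] P.a_inv_closed by simp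
        ultimately show ?thesis unfolding d_def minus_eq using P.a_closed by simp
      next
        case False
        hence "a \<notin> P" using a(2) mP by auto
        moreover have "a \<otimes> d \<in> P" using ad P.additive_subgroup_axioms additive_subgroup.zero_closed by simp
        ultimately show ?thesis using P.I_prime[OF ac dc] by auto
      qed
    qed
    thus "\<phi> t = t \<otimes> m" unfolding d_def using pt tc m(1)
      by (metis minus_equality r_neg1 m_closed add.inv_closed minus_minus a_minus_def) 
  qed
qed


lemma part1:
  fixes R :: "'a ring" (structure) and M :: "('a, 'b) module"
  assumes "cring R" "module R M" "principalideal I R"
  shows "H_R_zero R I M"
proof (rule H_zeroI)
  interpret cring R by fact
  interpret module R M by fact
  interpret principalideal I R by fact
  fix \<phi> assume Z: "\<phi> \<in> Z_R R I M"
  obtain a where a: "a \<in> carrier R" "I = Idl {a}" using generate by auto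
  hence Ia: "I = PIdl a" using cgenideal_eq_genideal by auto
  have "a \<in> I" using Ia a cgenideal_self by auto
  then obtain m where m: "m \<in> carrier M" "\<phi> a = a \<odot>\<^bsub>M\<^esub> m" using ZD(4)[OF Z] by auto
  show "\<exists>m\<in>carrier M. \<forall>t\<in>I. \<phi> t = t \<odot>\<^bsub>M\<^esub> m"
  proof (intro bexI[OF _ m(1)] ballI)
    fix t assume "t \<in> I"
    hence "t \<in> PIdl a" using Ia by simp
    then obtain x where x: "x \<in> carrier R" "t = x \<otimes> a" unfolding cgenideal_def by blast
    have "\<phi> t = x \<odot>\<^bsub>M\<^esub> \<phi> a" using ZD(3)[OF Z x(1) \<open>a \<in> I\<close>] x by simp
    also have "\<dots> = t \<odot>\<^bsub>M\<^esub> m" using m x a by (simp add: smult_assoc1)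
    finally show "\<phi> t = t \<odot>\<^bsub>M\<^esub> m" .
  qed
qed

lemma part2:
  fixes R :: "'a ring" (structure) and M :: "('a, 'b) module"
  assumes "domain R" "module R M" "ideal I R" "torsion_free R M"
  shows "H_R_zero R I M"
proof (rule H_zeroI)
  interpret domain R by fact
  interpret module R M by fact
  interpret ideal I R by fact
  fix \<phi> assume Z: "\<phi> \<in> Z_R R I M"
  show "\<exists>m\<in>carrier M. \<forall>t\<in>I. \<phi> t = t \<odot>\<^bsub>M\<^esub> m"
  proof (cases "I \<subseteq> {\<zero>}")
    case True
    show ?thesis
    proof (intro bexI[of _ "\<zero>\<^bsub>M\<^esub>"] ballI)
      fix t assume t: "t \<in> I"
      hence "t = \<zero>" using True by auto
      obtain m where "m \<in> carrier M" "\<phi> t = t \<odot>\<^bsub>M\<^esub> m" using ZD(4)[OF Z t] by auto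
      thus "\<phi> t = t \<odot>\<^bsub>M\<^esub> \<zero>\<^bsub>M\<^esub>" using \<open>t = \<zero>\<close> by simp
    qed simp
  next
    case False
    then obtain a where a: "a \<in> I" "a \<noteq> \<zero>" by auto
    have ac: "a \<in> carrier R" using a Icarr by auto
    obtain m where m: "m \<in> carrier M" "\<phi> a = a \<odot>\<^bsub>M\<^esub> m" using ZD(4)[OF Z a(1)] by auto
    show ?thesis
    proof (intro bexI[OF _ m(1)] ballI)
      fix t assume t: "t \<in> I"
      have tc: "t \<in> carrier R" using t Icarr by auto
      have "a \<odot>\<^bsub>M\<^esub> \<phi> t = \<phi> (a \<otimes> t)" using ZD(3)[OF Z ac t] by simp
      also have "\<dots> = \<phi> (t \<otimes> a)" using ac tc m_comm by simp
      also have "\<dots> = t \<odot>\<^bsub>M\<^esub> (a \<odot>\<^bsub>M\<^esub> m)" using ZD(3)[OF Z tc a(1)] m by simp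
      also have "\<dots> = (t \<otimes> a) \<odot>\<^bsub>M\<^esub> m" using ac tc m by (simp add: smult_assoc1)
      also have "\<dots> = (a \<otimes> t) \<odot>\<^bsub>M\<^esub> m" using ac tc by (simp add: m_comm)
      also have "\<dots> = a \<odot>\<^bsub>M\<^esub> (t \<odot>\<^bsub>M\<^esub> m)" using ac tc m by (simp add: smult_assoc1)
      finally have e: "a \<odot>\<^bsub>M\<^esub> \<phi> t = a \<odot>\<^bsub>M\<^esub> (t \<odot>\<^bsub>M\<^esub> m)" .
      have pt: "\<phi> t \<in> carrier M" using ZD(1)[OF Z t] .
      have tm: "t \<odot>\<^bsub>M\<^esub> m \<in> carrier M" using tc m by simp
      have "a \<odot>\<^bsub>M\<^esub> (\<phi> t \<ominus>\<^bsub>M\<^esub> t \<odot>\<^bsub>M\<^esub> m) = \<zero>\<^bsub>M\<^esub>"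
      proof -
        have "a \<odot>\<^bsub>M\<^esub> (\<phi> t \<ominus>\<^bsub>M\<^esub> t \<odot>\<^bsub>M\<^esub> m) = a \<odot>\<^bsub>M\<^esub> \<phi> t \<oplus>\<^bsub>M\<^esub> a \<odot>\<^bsub>M\<^esub> (\<ominus>\<^bsub>M\<^esub> (t \<odot>\<^bsub>M\<^esub> m))"
          unfolding M.minus_eq using pt tm ac by (simp add: smult_r_distr)
        also have "\<dots> = a \<odot>\<^bsub>M\<^esub> (t \<odot>\<^bsub>M\<^esub> m) \<oplus>\<^bsub>M\<^esub> \<ominus>\<^bsub>M\<^esub> (a \<odot>\<^bsub>M\<^esub> (t \<odot>\<^bsub>M\<^esub> m))"
          using e tm ac smult_r_minus by simp
        also have "\<dots> = \<zero>\<^bsub>M\<^esub>" using tm ac by (simp add: M.r_neg)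
        finally show ?thesis .
      qed
      hence "\<phi> t \<ominus>\<^bsub>M\<^esub> t \<odot>\<^bsub>M\<^esub> m = \<zero>\<^bsub>M\<^esub>"
        using assms(4) a(2) ac pt tm unfolding torsion_free_def by auto
      moreover have "(\<phi> t \<ominus>\<^bsub>M\<^esub> t \<odot>\<^bsub>M\<^esub> m) \<oplus>\<^bsub>M\<^esub> t \<odot>\<^bsub>M\<^esub> m = \<phi> t"
        unfolding M.minus_eq using pt tm by (simp add: M.a_assoc M.l_neg)
      ultimately show "\<phi> t = t \<odot>\<^bsub>M\<^esub> m" using tm by simp
    qed
  qed
qed



primrec prodl :: "('a, 'b) ring_scheme \<Rightarrow> 'a set list \<Rightarrow> 'a set" where
  "prodl R [] = carrier R"
| "prodl R (P # Ps) = ideal_prod R P (prodl R Ps)"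

context cring begin

lemma prodl_ideal: "(\<forall>P\<in>set Ps. ideal P R) \<Longrightarrow> ideal (prodl R Ps) R"
  by (induction Ps) (auto simp: oneideal ideal_prod_is_ideal)

lemma prodl_append:
  assumes "\<forall>P\<in>set A. ideal P R" "\<forall>P\<in>set B. ideal P R"
  shows "prodl R (A @ B) = prodl R A \<cdot> prodl R B"
  using assms(1)
proof (induction A)
  case Nil
  show ?case using ideal_prod_commute[OF oneideal prodl_ideal[OF assms(2)]]
      ideal_prod_one[OF prodl_ideal[OF assms(2)]] by simp
next
  case (Cons P A)
  thus ?case using ideal_prod_assoc[of P "prodl R A" "prodl R B"] prodl_ideal assms(2) by simp
qed

lemma prodl_remove:
  assumes "P \<in> set Ps" "\<forall>Q\<in>set Ps. ideal Q R"
  shows "prodl R Ps = P \<cdot> prodl R (remove1 P Ps)"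
  using assms
proof (induction Ps)
  case Nil thus ?case by simp
next
  case (Cons Q Qs)
  show ?case
  proof (cases "Q = P")
    case True thus ?thesis by simp
  next
    case False
    hence P: "P \<in> set Qs" using Cons by auto
    have iQ: "ideal Q R" "ideal P R" "\<forall>Q\<in>set Qs. ideal Q R" using Cons P by auto
    have ir: "ideal (prodl R (remove1 P Qs)) R"
      using prodl_ideal iQ(3) by (meson notin_set_remove1)
    have "prodl R (Q # Qs) = Q \<cdot> (P \<cdot> prodl R (remove1 P Qs))" using Cons.IH[OF P iQ(3)] by simp
    also have "\<dots> = (Q \<cdot> P) \<cdot> prodl R (remove1 P Qs)" using ideal_prod_assoc iQ ir by simp
    also have "\<dots> = (P \<cdot> Q) \<cdot> prodl R (remove1 P Qs)" using ideal_prod_commute iQ by simp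
    also have "\<dots> = P \<cdot> (Q \<cdot> prodl R (remove1 P Qs))" using ideal_prod_assoc iQ ir by simp
    finally show ?thesis using False by simp
  qed
qed

lemma prime_prodl:
  assumes "primeideal P R" "\<forall>Q\<in>set Ps. ideal Q R" "prodl R Ps \<subseteq> P"
  shows "\<exists>Q\<in>set Ps. Q \<subseteq> P"
  using assms(2,3)
proof (induction Ps)
  case Nil thus ?case using primeideal.I_notcarr[OF assms(1)] primeideal.axioms(1)[OF assms(1)]
      ideal.Icarr by fastforce
next
  case (Cons Q Qs)
  have "Q \<subseteq> P \<or> prodl R Qs \<subseteq> P"
    using primeideal_divides_ideal_prod[OF assms(1), of Q "prodl R Qs"] Cons.prems prodl_ideal by auto
  thus ?case using Cons by auto
qed

lemma ideal_prod_sub: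
  assumes "ideal K R" "\<And>i j. i \<in> I \<Longrightarrow> j \<in> J \<Longrightarrow> i \<otimes> j \<in> K"
  shows "I \<cdot> J \<subseteq> K"
proof
  fix s assume "s \<in> I \<cdot> J" thus "s \<in> K"
    by (induct s rule: ideal_prod.induct)
       (auto simp: assms(2) additive_subgroup.a_closed[OF ideal.axioms(1)[OF assms(1)]])
qed

lemma ideal_prod_mono:
  assumes "I \<subseteq> I'" "J \<subseteq> J'"
  shows "I \<cdot> J \<subseteq> I' \<cdot> J'"
proof
  fix s assume "s \<in> I \<cdot> J" thus "s \<in> I' \<cdot> J'"
    by (induct s rule: ideal_prod.induct) (use assms in \<open>auto intro: ideal_prod.intros\<close>)
qed

lemma prin_prod:
  assumes "ideal J R" "c \<in> carrier R"
  shows "(PIdl c) \<cdot> J = {c \<otimes> x | x. x \<in> J}"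
proof
  interpret ideal J R by fact
  show "(PIdl c) \<cdot> J \<subseteq> {c \<otimes> x | x. x \<in> J}"
  proof
    fix s assume "s \<in> (PIdl c) \<cdot> J" thus "s \<in> {c \<otimes> x | x. x \<in> J}"
    proof (induct s rule: ideal_prod.induct)
      case (prod i j)
      then obtain r where r: "r \<in> carrier R" "i = r \<otimes> c" unfolding cgenideal_def by auto
      have "i \<otimes> j = c \<otimes> (r \<otimes> j)" using r assms(2) prod(2) Icarr by (simp add: m_ac)
      moreover have "r \<otimes> j \<in> J" using I_l_closed prod(2) r by simp
      ultimately show ?case by blast
    next
      case (sum s1 s2)
      then obtain x y where xy: "x \<in> J" "y \<in> J" "s1 = c \<otimes> x" "s2 = c \<otimes> y" by auto
      hence "s1 \<oplus> s2 = c \<otimes> (x \<oplus> y)" using assms(2) Icarr by (simp add: r_distr)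
      thus ?case using xy a_closed by blast
    qed
  qed
  show "{c \<otimes> x | x. x \<in> J} \<subseteq> (PIdl c) \<cdot> J"
    using ideal_prod.prod[of c "PIdl c" _ J R] cgenideal_self[OF assms(2)] by auto
qed

end

lemma (in noetherian_ring) max_exists:
  assumes "S \<noteq> {}" "S \<subseteq> {I. ideal I R}"
  shows "\<exists>I\<in>S. \<forall>J\<in>S. I \<subseteq> J \<longrightarrow> J = I"
proof (rule subset_Zorn)
  fix C assume C: "subset.chain S C"
  show "\<exists>Ux\<in>S. \<forall>Xx\<in>C. Xx \<subseteq> Ux"
  proof (cases "C = {}")
    case True thus ?thesis using assms(1) by blast
  next
    case False
    have CS: "C \<subseteq> S" using C by (simp add: subset_chain_def)
    have "subset.chain {I. ideal I R} C" using C assms(2) by (simp add: subset_chain_def) blast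
    hence "\<Union>C \<in> C" by (rule ideal_chain_is_trivial[OF False])
    hence "\<Union>C \<in> S" using CS by blast
    moreover have "\<forall>Xx\<in>C. Xx \<subseteq> \<Union>C" by blast
    ultimately show ?thesis by blast
  qed
qed




context noetherian_domain begin

lemma integral_div:
  assumes IC: "integrally_closed R"
    and a: "a \<in> carrier R" "a \<noteq> \<zero>" and b: "b \<in> carrier R"
    and K: "K \<subseteq> carrier R" "x0 \<in> K" "x0 \<noteq> \<zero>"
    and stab: "\<And>g. g \<in> K \<Longrightarrow> \<exists>g'\<in>K. b \<otimes> g = a \<otimes> g'"
  shows "\<exists>x\<in>carrier R. b = a \<otimes> x"
proof -
  have x0c: "x0 \<in> carrier R" using K by auto
  define nx where "nx g = (SOME g'. g' \<in> K \<and> b \<otimes> g = a \<otimes> g')" for g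
  have nx: "nx g \<in> K \<and> b \<otimes> g = a \<otimes> nx g" if "g \<in> K" for g
    unfolding nx_def using someI_ex[of "\<lambda>g'. g' \<in> K \<and> b \<otimes> g = a \<otimes> g'"] stab[OF that] by blast
  define e where "e n = (nx ^^ n) x0" for n
  have eK: "e n \<in> K" for n by (induction n) (auto simp: e_def K(2) nx)
  have ec: "e n \<in> carrier R" for n using eK K(1) by auto
  have erec: "a \<otimes> e (Suc n) = b \<otimes> e n" for n using nx[OF eK[of n]] by (simp add: e_def)
  have epow: "a [^] n \<otimes> e n = b [^] n \<otimes> x0" for n :: nat
  proof (induction n)
    case 0 thus ?case using K by (auto simp: e_def)
  next
    case (Suc n)
    have "a [^] Suc n \<otimes> e (Suc n) = a [^] n \<otimes> (a \<otimes> e (Suc n))"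
      using a ec by (simp add: m_assoc)
    also have "\<dots> = b \<otimes> (a [^] n \<otimes> e n)" using erec a b ec by (simp add: m_lcomm)
    also have "\<dots> = b [^] Suc n \<otimes> x0" using Suc b x0c by (simp add: m_ac)
    finally show ?case .
  qed
  define Lin where "Lin n = {(\<Oplus>i\<in>{..n}. r i \<otimes> e i) | r. r \<in> {..n} \<rightarrow> carrier R}" for n
  have Lin_ideal: "ideal (Lin n) R" for n
  proof (rule idealI_simple)
    show "Lin n \<subseteq> carrier R" unfolding Lin_def using ec by (auto intro!: finsum_closed)
    have "(\<Oplus>i\<in>{..n}. \<zero> \<otimes> e i) = \<zero>" using ec by (simp add: finsum_zero)
    thus "\<zero> \<in> Lin n" unfolding Lin_def by force
    fix x y assume "x \<in> Lin n" "y \<in> Lin n"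
    then obtain r s where rs: "r \<in> {..n} \<rightarrow> carrier R" "s \<in> {..n} \<rightarrow> carrier R"
      "x = (\<Oplus>i\<in>{..n}. r i \<otimes> e i)" "y = (\<Oplus>i\<in>{..n}. s i \<otimes> e i)" unfolding Lin_def by auto
    have "x \<oplus> y = (\<Oplus>i\<in>{..n}. r i \<otimes> e i \<oplus> s i \<otimes> e i)" unfolding rs(3,4)
      using rs ec by (intro finsum_addf[symmetric]) auto
    also have "\<dots> = (\<Oplus>i\<in>{..n}. (r i \<oplus> s i) \<otimes> e i)"
      using rs ec by (intro finsum_cong') (auto simp: l_distr Pi_iff)
    finally show "x \<oplus> y \<in> Lin n" unfolding Lin_def using rs by force
  next
    fix t x assume t: "t \<in> carrier R" and "x \<in> Lin n"
    then obtain r where r: "r \<in> {..n} \<rightarrow> carrier R" "x = (\<Oplus>i\<in>{..n}. r i \<otimes> e i)" unfolding Lin_def by auto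
    have "t \<otimes> x = (\<Oplus>i\<in>{..n}. t \<otimes> (r i \<otimes> e i))" unfolding r(2)
      using r ec t by (intro finsum_rdistr) auto
    also have "\<dots> = (\<Oplus>i\<in>{..n}. (t \<otimes> r i) \<otimes> e i)"
      using r ec t by (intro finsum_cong') (auto simp: m_assoc Pi_iff)
    finally show "t \<otimes> x \<in> Lin n" unfolding Lin_def using r t by force
  qed
  have e_Lin: "e j \<in> Lin n" if "j \<le> n" for j n
  proof -
    have "(\<Oplus>i\<in>{..n}. (if j = i then \<one> else \<zero>) \<otimes> e i) = (\<Oplus>i\<in>{..n}. if j = i then e i else \<zero>)"
      using ec by (intro finsum_cong') auto
    also have "\<dots> = e j" using finsum_singleton[of j "{..n}" e] that ec by auto
    finally have h1: "e j = (\<Oplus>i\<in>{..n}. (if j = i then \<one> else \<zero>) \<otimes> e i)" by simp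
    have h2: "(\<lambda>i. if j = i then \<one> else \<zero>) \<in> {..n} \<rightarrow> carrier R" by auto
    show ?thesis unfolding Lin_def mem_Collect_eq
    proof (intro exI conjI)
      show "e j = (\<Oplus>i\<in>{..n}. (if j = i then \<one> else \<zero>) \<otimes> e i)" by (rule h1)
      show "(\<lambda>i. if j = i then \<one> else \<zero>) \<in> {..n} \<rightarrow> carrier R" by (rule h2)
    qed
  qed
  define Ch where "Ch = range (\<lambda>n. Idl (e ` {..n}))"
  have ecs: "e ` A \<subseteq> carrier R" for A using ec by auto
  have mono: "Idl (e ` {..n}) \<subseteq> Idl (e ` {..m})" if "n \<le> m" for n m
  proof -
    have "e ` {..n} \<subseteq> e ` {..m}" using that by (intro image_mono) auto
    thus ?thesis using subset_Idl_subset[OF ecs[of "{..m}"]] by blast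
  qed
  have "subset.chain {I. ideal I R} Ch"
    unfolding subset_chain_def
  proof (intro conjI ballI)
    show "Ch \<subseteq> {I. ideal I R}" using genideal_ideal[OF ecs] Ch_def by auto
    fix X1 Y1 assume "X1 \<in> Ch" "Y1 \<in> Ch"
    then obtain i j where "X1 = Idl (e ` {..i})" "Y1 = Idl (e ` {..j})" by (auto simp: Ch_def)
    thus "X1 \<subseteq> Y1 \<or> Y1 \<subseteq> X1" using mono[of i j] mono[of j i] nat_le_linear[of i j] by auto
  qed
  hence "\<Union>Ch \<in> Ch" using ideal_chain_is_trivial[of Ch] Ch_def by auto
  then obtain N where N: "\<Union>Ch = Idl (e ` {..N})" unfolding Ch_def by auto
  have "e (Suc N) \<in> Idl (e ` {..Suc N})" using genideal_self[OF ecs[of "{..Suc N}"]] by blast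
  hence "e (Suc N) \<in> Idl (e ` {..N})" using N Ch_def by auto
  moreover have "Idl (e ` {..N}) \<subseteq> Lin N" 
  proof (rule genideal_minimal[OF Lin_ideal])
    show "e ` {..N} \<subseteq> Lin N" using e_Lin by auto
  qed
  ultimately obtain r where r: "r \<in> {..N} \<rightarrow> carrier R" "e (Suc N) = (\<Oplus>i\<in>{..N}. r i \<otimes> e i)"
    unfolding Lin_def by auto
  define n where "n = Suc N"
  define S where "S = (\<Oplus>i\<in>{..N}. r i \<otimes> b [^] i \<otimes> a [^] (n - i))"
  have Sc: "S \<in> carrier R" unfolding S_def using r a b by (auto intro!: finsum_closed)
  have "b [^] n \<otimes> x0 = a [^] n \<otimes> e n" using epow by simp
  also have "\<dots> = (\<Oplus>i\<in>{..N}. a [^] n \<otimes> (r i \<otimes> e i))" unfolding n_def r(2)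
    using r ec a by (intro finsum_rdistr) auto
  also have "\<dots> = (\<Oplus>i\<in>{..N}. (r i \<otimes> b [^] i \<otimes> a [^] (n - i)) \<otimes> x0)"
  proof (intro finsum_cong')
    fix i assume i: "i \<in> {..N}"
    have ri: "r i \<in> carrier R" using r i by auto
    have "a [^] n = a [^] (n - i) \<otimes> a [^] i" using i a unfolding n_def
      by (simp add: nat_pow_mult)
    hence "a [^] n \<otimes> (r i \<otimes> e i) = (r i \<otimes> a [^] (n - i)) \<otimes> (a [^] i \<otimes> e i)"
      using a ri ec by (simp add: m_ac)
    also have "\<dots> = (r i \<otimes> a [^] (n - i)) \<otimes> (b [^] i \<otimes> x0)" using epow by simp
    also have "\<dots> = (r i \<otimes> b [^] i \<otimes> a [^] (n - i)) \<otimes> x0"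
      using a b ri x0c by (simp add: m_ac)
    finally show "a [^] n \<otimes> (r i \<otimes> e i) = (r i \<otimes> b [^] i \<otimes> a [^] (n - i)) \<otimes> x0" .
  qed (use r a b K in auto)
  also have "\<dots> = S \<otimes> x0" unfolding S_def
    using r a b K by (intro finsum_ldistr[symmetric]) auto
  finally have "b [^] n \<otimes> x0 = S \<otimes> x0" .
  hence bS: "b [^] n = S" using m_rcancel[of x0 "b [^] n" S] K Sc b by (auto simp: m_comm)
  define c where "c i = \<ominus> r i" for i
  have cP: "c \<in> {..<n} \<rightarrow> carrier R" unfolding c_def n_def using r lessThan_Suc_atMost by auto
  have "b [^] n \<oplus> (\<Oplus>i\<in>{..<n}. c i \<otimes> b [^] i \<otimes> a [^] (n - i)) =
        S \<oplus> (\<Oplus>i\<in>{..N}. c i \<otimes> b [^] i \<otimes> a [^] (n - i))" using bS unfolding n_def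
    by (simp add: lessThan_Suc_atMost)
  also have "\<dots> = (\<Oplus>i\<in>{..N}. r i \<otimes> b [^] i \<otimes> a [^] (n - i) \<oplus> c i \<otimes> b [^] i \<otimes> a [^] (n - i))"
    unfolding S_def using r a b by (intro finsum_addf[symmetric]) (auto simp: c_def)
  also have "\<dots> = (\<Oplus>i\<in>{..N}. \<zero>)"
  proof (intro finsum_cong')
    fix i assume "i \<in> {..N}"
    hence ri: "r i \<in> carrier R" using r by auto
    show "r i \<otimes> b [^] i \<otimes> a [^] (n - i) \<oplus> c i \<otimes> b [^] i \<otimes> a [^] (n - i) = \<zero>"
      unfolding c_def using ri a b by (simp add: l_minus r_neg)
  qed auto
  also have "\<dots> = \<zero>" by (simp add: finsum_zero)
  finally have eq: "b [^] n \<oplus> (\<Oplus>i\<in>{..<n}. c i \<otimes> b [^] i \<otimes> a [^] (n - i)) = \<zero>" .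
  have "n \<ge> 1" unfolding n_def by simp
  thus ?thesis using IC b a cP eq unfolding integrally_closed_def by blast
qed

end



context cring begin

definition colon :: "'a \<Rightarrow> 'a set \<Rightarrow> 'a set" where
  "colon c J = {q \<in> carrier R. \<forall>p\<in>J. q \<otimes> p \<in> PIdl c}"

lemma colon_ideal:
  assumes "c \<in> carrier R" "J \<subseteq> carrier R"
  shows "ideal (colon c J) R"
proof (rule idealI_simple)
  interpret C: ideal "PIdl c" R by (rule cgenideal_ideal[OF assms(1)])
  show "colon c J \<subseteq> carrier R" unfolding colon_def by auto
  show "\<zero> \<in> colon c J" unfolding colon_def using assms(2) C.zero_closed by auto
  fix x y assume xy: "x \<in> colon c J" "y \<in> colon c J"
  have xyc: "x \<in> carrier R" "y \<in> carrier R" using xy unfolding colon_def by auto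
  { fix p assume p: "p \<in> J"
    hence pc: "p \<in> carrier R" using assms(2) by auto
    have "(x \<oplus> y) \<otimes> p = x \<otimes> p \<oplus> y \<otimes> p" using xyc pc by (simp add: l_distr)
    moreover have "x \<otimes> p \<in> PIdl c" "y \<otimes> p \<in> PIdl c" using xy p unfolding colon_def by auto
    ultimately have "(x \<oplus> y) \<otimes> p \<in> PIdl c" using C.a_closed by simp }
  thus "x \<oplus> y \<in> colon c J" unfolding colon_def using xyc by auto
next
  interpret C: ideal "PIdl c" R by (rule cgenideal_ideal[OF assms(1)])
  fix r x assume r: "r \<in> carrier R" and x: "x \<in> colon c J"
  have xc: "x \<in> carrier R" using x unfolding colon_def by auto
  { fix p assume p: "p \<in> J"
    hence pc: "p \<in> carrier R" using assms(2) by auto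
    have "(r \<otimes> x) \<otimes> p = r \<otimes> (x \<otimes> p)" using xc pc r by (simp add: m_assoc)
    moreover have "x \<otimes> p \<in> PIdl c" using x p unfolding colon_def by auto
    ultimately have "(r \<otimes> x) \<otimes> p \<in> PIdl c" using C.I_l_closed r by simp }
  thus "r \<otimes> x \<in> colon c J" unfolding colon_def using xc r by auto
qed

lemma colon_self:
  assumes "c \<in> carrier R" "J \<subseteq> carrier R"
  shows "c \<in> colon c J"
proof -
  { fix p assume "p \<in> J"
    hence "p \<in> carrier R" using assms(2) by auto
    hence "c \<otimes> p \<in> PIdl c" unfolding cgenideal_def using assms(1) m_comm by blast }
  thus ?thesis unfolding colon_def using assms(1) by auto
qed

lemma colon_prod:
  assumes "c \<in> carrier R" "J \<subseteq> carrier R"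
  shows "J \<cdot> colon c J \<subseteq> PIdl c"
proof (rule ideal_prod_sub[OF cgenideal_ideal[OF assms(1)]])
  fix i j assume "i \<in> J" "j \<in> colon c J"
  moreover have "i \<in> carrier R" "j \<in> carrier R" using calculation assms(2) unfolding colon_def by auto
  ultimately show "i \<otimes> j \<in> PIdl c" unfolding colon_def using m_comm by auto
qed

definition quot :: "'a \<Rightarrow> 'a set \<Rightarrow> 'a set" where
  "quot c J = {x \<in> carrier R. c \<otimes> x \<in> J}"

lemma quot_ideal:
  assumes "c \<in> carrier R" "ideal J R"
  shows "ideal (quot c J) R"
proof (rule idealI_simple)
  interpret J: ideal J R by fact
  show "quot c J \<subseteq> carrier R" unfolding quot_def by auto
  show "\<zero> \<in> quot c J" unfolding quot_def using assms(1) by simp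
  fix x y assume "x \<in> quot c J" "y \<in> quot c J"
  thus "x \<oplus> y \<in> quot c J" unfolding quot_def using assms(1) J.a_closed by (auto simp: r_distr)
next
  interpret J: ideal J R by fact
  fix r x assume "r \<in> carrier R" "x \<in> quot c J"
  moreover have "c \<otimes> (r \<otimes> x) = r \<otimes> (c \<otimes> x)" using calculation assms(1) unfolding quot_def
    by (auto simp: m_lcomm)
  ultimately show "r \<otimes> x \<in> quot c J" unfolding quot_def using J.I_l_closed by auto
qed

lemma np_ideal:
  assumes "\<forall>P\<in>set Ps. primeideal P R \<and> P \<noteq> {\<zero>}"
  shows "\<forall>P\<in>set Ps. ideal P R"
proof
  fix P assume "P \<in> set Ps"
  hence "primeideal P R" using assms by blast
  thus "ideal P R" by (rule primeideal.axioms(1))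
qed

lemma PIdl_one: "PIdl \<one> = carrier R"
  using cgenideal_eq_genideal[of \<one>] genideal_one by simp

end

context noetherian_domain begin

lemma nonzero_elem:
  assumes "ideal I R" "I \<noteq> {\<zero>}"
  shows "\<exists>x\<in>I. x \<noteq> \<zero>"
proof -
  have "\<zero> \<in> I" using assms(1) additive_subgroup.zero_closed ideal.axioms(1) by blast
  thus ?thesis using assms(2) by blast
qed

lemma prime_prod_contained:
  assumes "ideal I R" "I \<noteq> {\<zero>}"
  shows "\<exists>Ps. (\<forall>P\<in>set Ps. primeideal P R \<and> P \<noteq> {\<zero>}) \<and> prodl R Ps \<subseteq> I"
proof (rule ccontr)
  assume nex: "\<not> ?thesis"
  define S where "S = {I. ideal I R \<and> I \<noteq> {\<zero>} \<and>
     \<not> (\<exists>Ps. (\<forall>P\<in>set Ps. primeideal P R \<and> P \<noteq> {\<zero>}) \<and> prodl R Ps \<subseteq> I)}"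
  have "S \<noteq> {}" using assms nex unfolding S_def by blast
  moreover have "S \<subseteq> {I. ideal I R}" unfolding S_def by blast
  ultimately obtain J where J: "J \<in> S" "\<And>J'. J' \<in> S \<Longrightarrow> J \<subseteq> J' \<Longrightarrow> J' = J"
    using max_exists by meson
  have iJ: "ideal J R" and nzJ: "J \<noteq> {\<zero>}"
    and nJ: "\<And>Ps. (\<forall>P\<in>set Ps. primeideal P R \<and> P \<noteq> {\<zero>}) \<Longrightarrow> \<not> prodl R Ps \<subseteq> J"
    using J(1) unfolding S_def by blast+
  interpret J: ideal J R by fact
  have "\<not> primeideal J R"
  proof
    assume "primeideal J R"
    hence "prodl R [J] \<subseteq> J" using ideal_prod_one[OF iJ] by simp
    thus False using nJ[of "[J]"] \<open>primeideal J R\<close> nzJ by auto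
  qed
  moreover have "carrier R \<noteq> J" using nJ[of "[]"] by auto
  ultimately obtain a b where ab: "a \<in> carrier R" "b \<in> carrier R" "a \<otimes> b \<in> J" "a \<notin> J" "b \<notin> J"
    using J.primeidealCD[OF is_cring] by blast
  have big: "\<exists>Ps. (\<forall>P\<in>set Ps. primeideal P R \<and> P \<noteq> {\<zero>}) \<and> prodl R Ps \<subseteq> J <+>\<^bsub>R\<^esub> PIdl x"
    if x: "x \<in> carrier R" "x \<notin> J" for x
  proof (rule ccontr)
    assume "\<not> ?thesis"
    moreover have "ideal (J <+>\<^bsub>R\<^esub> PIdl x) R" "J \<subseteq> J <+>\<^bsub>R\<^esub> PIdl x" "x \<in> J <+>\<^bsub>R\<^esub> PIdl x"
      using sum_prin[OF iJ x(1)] by auto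
    moreover have "J <+>\<^bsub>R\<^esub> PIdl x \<noteq> {\<zero>}" using calculation(3) nzJ J.zero_closed by blast
    ultimately have "(J <+>\<^bsub>R\<^esub> PIdl x) \<in> S" unfolding S_def by blast
    hence "J <+>\<^bsub>R\<^esub> PIdl x = J" using J(2) sum_prin(2)[OF iJ x(1)] by blast
    thus False using sum_prin(3)[OF iJ x(1)] x(2) by blast
  qed
  obtain Pa where Pa: "\<forall>P\<in>set Pa. primeideal P R \<and> P \<noteq> {\<zero>}" "prodl R Pa \<subseteq> J <+>\<^bsub>R\<^esub> PIdl a"
    using big[OF ab(1,4)] by blast
  obtain Pb where Pb: "\<forall>P\<in>set Pb. primeideal P R \<and> P \<noteq> {\<zero>}" "prodl R Pb \<subseteq> J <+>\<^bsub>R\<^esub> PIdl b"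
    using big[OF ab(2,5)] by blast
  have ia: "\<forall>P\<in>set Pa. ideal P R" "\<forall>P\<in>set Pb. ideal P R" using np_ideal Pa(1) Pb(1) by blast+
  have "prodl R (Pa @ Pb) = prodl R Pa \<cdot> prodl R Pb" using prodl_append[OF ia] .
  also have "\<dots> \<subseteq> (J <+>\<^bsub>R\<^esub> PIdl a) \<cdot> (J <+>\<^bsub>R\<^esub> PIdl b)" using ideal_prod_mono[OF Pa(2) Pb(2)] .
  also have "\<dots> \<subseteq> J"
  proof (rule ideal_prod_sub[OF iJ])
    fix u v assume "u \<in> J <+>\<^bsub>R\<^esub> PIdl a" "v \<in> J <+>\<^bsub>R\<^esub> PIdl b"
    thus "u \<otimes> v \<in> J" using sum_prin_prod[OF iJ ab(1,2,3)] by blast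
  qed
  finally show False using nJ[of "Pa @ Pb"] Pa(1) Pb(1) by auto
qed

lemma max_colon:
  assumes DIM: "\<And>P. primeideal P R \<Longrightarrow> P \<noteq> {\<zero>} \<Longrightarrow> maximalideal P R"
    and mP: "maximalideal P R" and nz: "P \<noteq> {\<zero>}"
  shows "\<exists>a b. a \<in> P \<and> a \<noteq> \<zero> \<and> b \<in> carrier R \<and> b \<notin> PIdl a \<and> (\<forall>p\<in>P. b \<otimes> p \<in> PIdl a)"
proof -
  interpret P: maximalideal P R by fact
  have pP: "primeideal P R" using maximalideal_prime[OF mP] .
  obtain a where a: "a \<in> P" "a \<noteq> \<zero>" using nonzero_elem[OF P.is_ideal nz] by blast
  have ac: "a \<in> carrier R" using a P.Icarr by auto
  have ia: "ideal (PIdl a) R" using cgenideal_ideal[OF ac] .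
  have "PIdl a \<noteq> {\<zero>}" using cgenideal_self[OF ac] a(2) by blast
  define L where "L = {Ps. (\<forall>P\<in>set Ps. primeideal P R \<and> P \<noteq> {\<zero>}) \<and> prodl R Ps \<subseteq> PIdl a}"
  obtain Ps0 where "Ps0 \<in> L" using prime_prod_contained[OF ia \<open>PIdl a \<noteq> {\<zero>}\<close>] L_def by blast
  then obtain Ps where Ps: "Ps \<in> L" "\<And>Qs. Qs \<in> L \<Longrightarrow> length Ps \<le> length Qs"
    using ex_has_least_nat[of "\<lambda>Ps. Ps \<in> L" Ps0 length] by blast
  have npPs: "\<forall>P\<in>set Ps. primeideal P R \<and> P \<noteq> {\<zero>}" and sub: "prodl R Ps \<subseteq> PIdl a"
    using Ps(1) L_def by auto
  have iPs: "\<forall>Q\<in>set Ps. ideal Q R" using np_ideal[OF npPs] .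
  have aP: "PIdl a \<subseteq> P" using cgenideal_minimal[OF P.is_ideal a(1)] .
  obtain Q where Q: "Q \<in> set Ps" "Q \<subseteq> P" using prime_prodl[OF pP iPs] sub aP by blast
  have mQ: "maximalideal Q R" using DIM npPs Q(1) by blast
  have "P = Q \<or> P = carrier R" using maximalideal.I_maximal[OF mQ P.is_ideal Q(2)] P.Icarr by blast
  hence QP: "Q = P" using P.I_notcarr by auto
  define Ps' where "Ps' = remove1 P Ps"
  have len: "length Ps' < length Ps" unfolding Ps'_def using Q QP length_pos_if_in_set[of P Ps] by (simp add: length_remove1)
  have npPs': "\<forall>P\<in>set Ps'. primeideal P R \<and> P \<noteq> {\<zero>}"
    unfolding Ps'_def using npPs set_remove1_subset[of P Ps] by blast
  have "Ps' \<notin> L"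
  proof
    assume "Ps' \<in> L"
    hence "length Ps \<le> length Ps'" by (rule Ps(2))
    thus False using len by simp
  qed
  hence "\<not> prodl R Ps' \<subseteq> PIdl a" using npPs' L_def by blast
  then obtain b where b: "b \<in> prodl R Ps'" "b \<notin> PIdl a" by blast
  have iPs': "ideal (prodl R Ps') R" using prodl_ideal[OF np_ideal[OF npPs']] .
  have bc: "b \<in> carrier R" using ideal.Icarr[OF iPs' b(1)] .
  have eq: "prodl R Ps = P \<cdot> prodl R Ps'" unfolding Ps'_def using prodl_remove[OF _ iPs] Q QP by blast
  have "\<forall>p\<in>P. b \<otimes> p \<in> PIdl a"
  proof
    fix p assume p: "p \<in> P"
    have "p \<otimes> b \<in> P \<cdot> prodl R Ps'" using ideal_prod.prod[OF p b(1)] .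
    hence "p \<otimes> b \<in> PIdl a" using eq sub by blast
    thus "b \<otimes> p \<in> PIdl a" using m_comm[OF bc P.Icarr[OF p]] by simp
  qed
  thus ?thesis using a bc b(2) by blast
qed

end



context noetherian_domain begin

lemma max_invertible:
  assumes IC: "integrally_closed R"
    and DIM: "\<And>P. primeideal P R \<Longrightarrow> P \<noteq> {\<zero>} \<Longrightarrow> maximalideal P R"
    and mP: "maximalideal P R" and nz: "P \<noteq> {\<zero>}"
  shows "\<exists>c Q. c \<in> carrier R \<and> c \<noteq> \<zero> \<and> ideal Q R \<and> P \<cdot> Q = PIdl c"
proof -
  interpret P: maximalideal P R by fact
  obtain a b where ab: "a \<in> P" "a \<noteq> \<zero>" "b \<in> carrier R" "b \<notin> PIdl a" "\<forall>p\<in>P. b \<otimes> p \<in> PIdl a"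
    using max_colon[OF DIM mP nz] by blast
  have ac: "a \<in> carrier R" using ab(1) P.Icarr by auto
  have Pc: "P \<subseteq> carrier R" using P.Icarr by auto
  define Q where "Q = colon a P"
  have iQ: "ideal Q R" unfolding Q_def using colon_ideal[OF ac Pc] .
  have PQ: "P \<cdot> Q \<subseteq> PIdl a" unfolding Q_def using colon_prod[OF ac Pc] .
  have iPQ: "ideal (P \<cdot> Q) R" using ideal_prod_is_ideal[OF P.is_ideal iQ] .
  have aQ: "a \<in> Q" unfolding Q_def using colon_self[OF ac Pc] .
  have bQ: "b \<in> Q" unfolding Q_def colon_def using ab(3,5) by blast
  define P' where "P' = quot a (P \<cdot> Q)"
  have iP': "ideal P' R" unfolding P'_def using quot_ideal[OF ac iPQ] .
  have PP': "P \<subseteq> P'"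
  proof
    fix p assume p: "p \<in> P"
    have "p \<otimes> a \<in> P \<cdot> Q" using ideal_prod.prod[OF p aQ] .
    hence "a \<otimes> p \<in> P \<cdot> Q" using m_comm[OF ac P.Icarr[OF p]] by simp
    thus "p \<in> P'" unfolding P'_def quot_def using P.Icarr[OF p] by blast
  qed
  have "P' = P \<or> P' = carrier R" using P.I_maximal[OF iP' PP'] ideal.Icarr[OF iP'] by blast
  thus ?thesis
  proof
    assume "P' = carrier R"
    hence "\<one> \<in> P'" by simp
    hence "a \<in> P \<cdot> Q" unfolding P'_def quot_def using ac by simp
    hence "PIdl a \<subseteq> P \<cdot> Q" using cgenideal_minimal[OF iPQ] by blast
    hence "P \<cdot> Q = PIdl a" using PQ by blast
    thus ?thesis using ac ab(2) iQ by blast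
  next
    assume P'P: "P' = P"
    have "\<exists>x\<in>carrier R. b = a \<otimes> x"
    proof (rule integral_div[OF IC ac ab(2) ab(3) Pc ab(1) ab(2)])
      fix g assume g: "g \<in> P"
      have gc: "g \<in> carrier R" using P.Icarr[OF g] .
      have "b \<otimes> g \<in> PIdl a" using ab(5) g by blast
      then obtain x where x: "x \<in> carrier R" "b \<otimes> g = x \<otimes> a" unfolding cgenideal_def by blast
      have "g \<otimes> b \<in> P \<cdot> Q" using ideal_prod.prod[OF g bQ] .
      hence "a \<otimes> x \<in> P \<cdot> Q" using x m_comm[OF gc ab(3)] m_comm[OF x(1) ac] by simp
      hence "x \<in> P" using x(1) P'P unfolding P'_def quot_def by blast
      moreover have "b \<otimes> g = a \<otimes> x" using x m_comm[OF x(1) ac] by simp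
      ultimately show "\<exists>g'\<in>P. b \<otimes> g = a \<otimes> g'" by blast
    qed
    then obtain x where "x \<in> carrier R" "b = a \<otimes> x" by blast
    hence "b \<in> PIdl a" unfolding cgenideal_def using m_comm[OF ac] by blast
    thus ?thesis using ab(4) by blast
  qed
qed

lemma exists_maximal_above:
  assumes "ideal I R" "I \<noteq> carrier R"
  shows "\<exists>P. maximalideal P R \<and> I \<subseteq> P"
proof -
  define T where "T = {J. ideal J R \<and> I \<subseteq> J \<and> J \<noteq> carrier R}"
  have "T \<noteq> {}" using assms T_def by blast
  moreover have "T \<subseteq> {J. ideal J R}" unfolding T_def by blast
  ultimately obtain P where P: "P \<in> T" "\<And>J. J \<in> T \<Longrightarrow> P \<subseteq> J \<Longrightarrow> J = P"
    using max_exists by meson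
  have "maximalideal P R"
  proof (rule maximalidealI)
    show "ideal P R" "carrier R \<noteq> P" using P(1) T_def by auto
    fix J assume J: "ideal J R" "P \<subseteq> J" "J \<subseteq> carrier R"
    show "J = P \<or> J = carrier R"
    proof (cases "J = carrier R")
      case False
      hence "J \<in> T" using J P(1) T_def by blast
      thus ?thesis using P(2) J(2) by blast
    qed simp
  qed
  thus ?thesis using P(1) T_def by blast
qed

lemma all_invertible:
  assumes IC: "integrally_closed R"
    and DIM: "\<And>P. primeideal P R \<Longrightarrow> P \<noteq> {\<zero>} \<Longrightarrow> maximalideal P R"
    and I: "ideal I R" "I \<noteq> {\<zero>}"
  shows "\<exists>c Q. c \<in> carrier R \<and> c \<noteq> \<zero> \<and> ideal Q R \<and> I \<cdot> Q = PIdl c"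
proof (rule ccontr)
  assume nex: "\<not> ?thesis"
  define S where "S = {I. ideal I R \<and> I \<noteq> {\<zero>} \<and>
     \<not> (\<exists>c Q. c \<in> carrier R \<and> c \<noteq> \<zero> \<and> ideal Q R \<and> I \<cdot> Q = PIdl c)}"
  have "S \<noteq> {}" using I nex unfolding S_def by blast
  moreover have "S \<subseteq> {I. ideal I R}" unfolding S_def by blast
  ultimately obtain J where J: "J \<in> S" "\<And>J'. J' \<in> S \<Longrightarrow> J \<subseteq> J' \<Longrightarrow> J' = J"
    using max_exists by meson
  have iJ: "ideal J R" and nzJ: "J \<noteq> {\<zero>}"
    and nJ: "\<And>c Q. c \<in> carrier R \<Longrightarrow> c \<noteq> \<zero> \<Longrightarrow> ideal Q R \<Longrightarrow> J \<cdot> Q \<noteq> PIdl c"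
    using J(1) unfolding S_def by blast+
  interpret J: ideal J R by fact
  have Jc: "J \<subseteq> carrier R" using J.Icarr by auto
  have "J \<noteq> carrier R"
  proof
    assume "J = carrier R"
    hence "J \<cdot> carrier R = PIdl \<one>" using ideal_prod_one[OF oneideal] PIdl_one by simp
    thus False using nJ[OF one_closed _ oneideal] by simp
  qed
  then obtain P where mP: "maximalideal P R" and JP: "J \<subseteq> P" using exists_maximal_above[OF iJ] by blast
  interpret P: maximalideal P R by fact
  have Pc: "P \<subseteq> carrier R" using P.Icarr by auto
  have nzP: "P \<noteq> {\<zero>}" using JP nzJ J.zero_closed by blast
  obtain c Q0 where cQ0: "c \<in> carrier R" "c \<noteq> \<zero>" "ideal Q0 R" "P \<cdot> Q0 = PIdl c"
    using max_invertible[OF IC DIM mP nzP] by blast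
  define Q where "Q = colon c P"
  have iQ: "ideal Q R" unfolding Q_def using colon_ideal[OF cQ0(1) Pc] .
  have Q0Q: "Q0 \<subseteq> Q"
  proof
    fix q assume q: "q \<in> Q0"
    have qc: "q \<in> carrier R" using ideal.Icarr[OF cQ0(3) q] .
    { fix p assume p: "p \<in> P"
      have "p \<otimes> q \<in> PIdl c" using ideal_prod.prod[OF p q] cQ0(4) by blast
      hence "q \<otimes> p \<in> PIdl c" using m_comm[OF qc P.Icarr[OF p]] by simp }
    thus "q \<in> Q" unfolding Q_def colon_def using qc by blast
  qed
  have PQ: "P \<cdot> Q = PIdl c"
  proof
    show "P \<cdot> Q \<subseteq> PIdl c" unfolding Q_def using colon_prod[OF cQ0(1) Pc] .
    show "PIdl c \<subseteq> P \<cdot> Q" using ideal_prod_mono[OF _ Q0Q, of P P] cQ0(4) by blast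
  qed
  have cQ: "c \<in> Q" unfolding Q_def using colon_self[OF cQ0(1) Pc] .
  have JQ: "J \<cdot> Q \<subseteq> PIdl c" using ideal_prod_mono[OF JP, of Q Q] PQ by blast
  have iJQ: "ideal (J \<cdot> Q) R" using ideal_prod_is_ideal[OF iJ iQ] .
  define J' where "J' = quot c (J \<cdot> Q)"
  have iJ': "ideal J' R" unfolding J'_def using quot_ideal[OF cQ0(1) iJQ] .
  have JJ': "J \<subseteq> J'"
  proof
    fix p assume p: "p \<in> J"
    have "p \<otimes> c \<in> J \<cdot> Q" using ideal_prod.prod[OF p cQ] .
    hence "c \<otimes> p \<in> J \<cdot> Q" using m_comm[OF cQ0(1) J.Icarr[OF p]] by simp
    thus "p \<in> J'" unfolding J'_def quot_def using J.Icarr[OF p] by blast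
  qed
  have JQ_eq: "J \<cdot> Q = (PIdl c) \<cdot> J'"
  proof -
    have "J \<cdot> Q = {c \<otimes> x | x. x \<in> J'}"
    proof
      show "J \<cdot> Q \<subseteq> {c \<otimes> x | x. x \<in> J'}"
      proof
        fix y assume y: "y \<in> J \<cdot> Q"
        hence "y \<in> PIdl c" using JQ by blast
        then obtain x where x: "x \<in> carrier R" "y = x \<otimes> c" unfolding cgenideal_def by blast
        hence "y = c \<otimes> x" using m_comm[OF x(1) cQ0(1)] by simp
        moreover hence "x \<in> J'" unfolding J'_def quot_def using y x(1) by blast
        ultimately show "y \<in> {c \<otimes> x | x. x \<in> J'}" by blast
      qed
      show "{c \<otimes> x | x. x \<in> J'} \<subseteq> J \<cdot> Q" unfolding J'_def quot_def by blast
    qed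
    thus ?thesis using prin_prod[OF iJ' cQ0(1)] by simp
  qed
  have "J' \<noteq> J"
  proof
    assume J'J: "J' = J"
    obtain x0 where x0: "x0 \<in> J" "x0 \<noteq> \<zero>" using nonzero_elem[OF iJ nzJ] by blast
    have QsubC: "Q \<subseteq> PIdl c"
    proof
      fix q assume q: "q \<in> Q"
      have qc: "q \<in> carrier R" using ideal.Icarr[OF iQ q] .
      have "\<exists>x\<in>carrier R. q = c \<otimes> x"
      proof (rule integral_div[OF IC cQ0(1) cQ0(2) qc Jc x0 ])
        fix g assume g: "g \<in> J"
        have gc: "g \<in> carrier R" using J.Icarr[OF g] .
        have gq: "g \<otimes> q \<in> J \<cdot> Q" using ideal_prod.prod[OF g q] .
        hence "g \<otimes> q \<in> PIdl c" using JQ by blast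
        then obtain x where x: "x \<in> carrier R" "g \<otimes> q = x \<otimes> c" unfolding cgenideal_def by blast
        have eq: "q \<otimes> g = c \<otimes> x" using x m_comm[OF gc qc] m_comm[OF x(1) cQ0(1)] by simp
        hence "c \<otimes> x \<in> J \<cdot> Q" using gq m_comm[OF gc qc] by simp
        hence "x \<in> J" using x(1) J'J unfolding J'_def quot_def by blast
        thus "\<exists>g'\<in>J. q \<otimes> g = c \<otimes> g'" using eq by blast
      qed
      thus "q \<in> PIdl c" unfolding cgenideal_def using m_comm[OF cQ0(1)] by blast
    qed
    have "PIdl c \<subseteq> P \<cdot> (PIdl c)" using PQ ideal_prod_mono[OF _ QsubC, of P P] by blast
    also have "\<dots> = (PIdl c) \<cdot> P" using ideal_prod_commute[OF P.is_ideal cgenideal_ideal[OF cQ0(1)]] .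
    also have "\<dots> = {c \<otimes> x | x. x \<in> P}" using prin_prod[OF P.is_ideal cQ0(1)] .
    finally have "c \<in> {c \<otimes> x | x. x \<in> P}" using cgenideal_self[OF cQ0(1)] by blast
    then obtain p where p: "p \<in> P" "c = c \<otimes> p" by blast
    hence "c \<otimes> \<one> = c \<otimes> p" using cQ0(1) by simp
    hence "p = \<one>" using m_lcancel[OF cQ0(2) cQ0(1) one_closed P.Icarr[OF p(1)]] by simp
    hence "\<one> \<in> P" using p by simp
    thus False using P.one_imp_carrier P.I_notcarr by simp
  qed
  hence "J' \<notin> S" using J(2) JJ' by blast
  moreover have "J' \<noteq> {\<zero>}" using JJ' nzJ J.zero_closed by blast
  ultimately obtain c' Q' where cQ': "c' \<in> carrier R" "c' \<noteq> \<zero>" "ideal Q' R" "J' \<cdot> Q' = PIdl c'"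
    using iJ' unfolding S_def by blast
  have "J \<cdot> (Q \<cdot> Q') = (J \<cdot> Q) \<cdot> Q'" using ideal_prod_assoc[OF iJ iQ cQ'(3)] by simp
  also have "\<dots> = ((PIdl c) \<cdot> J') \<cdot> Q'" using JQ_eq by simp
  also have "\<dots> = (PIdl c) \<cdot> (PIdl c')"
    using ideal_prod_assoc[OF cgenideal_ideal[OF cQ0(1)] iJ' cQ'(3)] cQ'(4) by simp
  also have "\<dots> = {c \<otimes> x | x. x \<in> PIdl c'}" using prin_prod[OF cgenideal_ideal[OF cQ'(1)] cQ0(1)] .
  also have "\<dots> = PIdl (c \<otimes> c')"
  proof
    show "{c \<otimes> x | x. x \<in> PIdl c'} \<subseteq> PIdl (c \<otimes> c')"
    proof
      fix y assume "y \<in> {c \<otimes> x | x. x \<in> PIdl c'}"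
      then obtain r where r: "r \<in> carrier R" "y = c \<otimes> (r \<otimes> c')" unfolding cgenideal_def by blast
      hence "y = r \<otimes> (c \<otimes> c')" using cQ0(1) cQ'(1) by (simp add: m_lcomm)
      thus "y \<in> PIdl (c \<otimes> c')" unfolding cgenideal_def using r(1) by blast
    qed
    show "PIdl (c \<otimes> c') \<subseteq> {c \<otimes> x | x. x \<in> PIdl c'}"
    proof
      fix y assume "y \<in> PIdl (c \<otimes> c')"
      then obtain r where r: "r \<in> carrier R" "y = r \<otimes> (c \<otimes> c')" unfolding cgenideal_def by blast
      hence "y = c \<otimes> (r \<otimes> c')" using cQ0(1) cQ'(1) by (simp add: m_lcomm)
      moreover have "r \<otimes> c' \<in> PIdl c'" unfolding cgenideal_def using r(1) by blast
      ultimately show "y \<in> {c \<otimes> x | x. x \<in> PIdl c'}" by blast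
    qed
  qed
  finally have "J \<cdot> (Q \<cdot> Q') = PIdl (c \<otimes> c')" .
  moreover have "c \<otimes> c' \<in> carrier R" "c \<otimes> c' \<noteq> \<zero>" using cQ0(1,2) cQ'(1,2) integral_iff by auto
  moreover have "ideal (Q \<cdot> Q') R" using ideal_prod_is_ideal[OF iQ cQ'(3)] .
  ultimately show False using nJ by blast
qed

end



lemma part3:
  fixes R :: "'a ring" (structure) and M :: "('a, 'b) module"
  assumes DD: "dedekind_domain R" and MM: "module R M" and II: "ideal I R"
  shows "H_R_zero R I M"
proof (rule H_zeroI)
  interpret noetherian_domain R using DD unfolding dedekind_domain_def by blast
  interpret module R M by fact
  interpret ideal I R by fact
  have IC: "integrally_closed R" using DD unfolding dedekind_domain_def by blast
  have DIM: "\<And>P. primeideal P R \<Longrightarrow> P \<noteq> {\<zero>} \<Longrightarrow> maximalideal P R"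
    using DD unfolding dedekind_domain_def by blast
  fix \<phi> assume Z: "\<phi> \<in> Z_R R I M"
  show "\<exists>m\<in>carrier M. \<forall>t\<in>I. \<phi> t = t \<odot>\<^bsub>M\<^esub> m"
  proof (cases "I = {\<zero>}")
    case True
    show ?thesis
    proof (intro bexI[of _ "\<zero>\<^bsub>M\<^esub>"] ballI)
      fix t assume t: "t \<in> I"
      hence "t = \<zero>" using True by auto
      obtain m where "m \<in> carrier M" "\<phi> t = t \<odot>\<^bsub>M\<^esub> m" using ZD(4)[OF Z t] by auto
      thus "\<phi> t = t \<odot>\<^bsub>M\<^esub> \<zero>\<^bsub>M\<^esub>" using \<open>t = \<zero>\<close> by simp
    qed simp
  next
    case False
    obtain c Q where cQ: "c \<in> carrier R" "c \<noteq> \<zero>" "ideal Q R" "I \<cdot> Q = PIdl c"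
      using all_invertible[OF IC DIM II False] by blast
    interpret Q: ideal Q R by fact
    define G where "G = {g \<in> carrier R. \<exists>m\<in>carrier M. \<forall>t\<in>I. g \<odot>\<^bsub>M\<^esub> \<phi> t = t \<odot>\<^bsub>M\<^esub> m}"
    have key: "\<exists>g\<in>G. y = c \<otimes> g" if y: "y \<in> I \<cdot> Q" for y
      using y
    proof (induct y rule: ideal_prod.induct)
      case (prod t0 r)
      have t0c: "t0 \<in> carrier R" using Icarr[OF prod(1)] .
      have rc: "r \<in> carrier R" using Q.Icarr[OF prod(2)] .
      have "t0 \<otimes> r \<in> PIdl c" using ideal_prod.prod[OF prod(1,2)] cQ(4) by blast
      then obtain g where g: "g \<in> carrier R" "t0 \<otimes> r = g \<otimes> c" unfolding cgenideal_def by blast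
      have g': "t0 \<otimes> r = c \<otimes> g" using g m_comm[OF g(1) cQ(1)] by simp
      obtain m0 where m0: "m0 \<in> carrier M" "\<phi> t0 = t0 \<odot>\<^bsub>M\<^esub> m0" using ZD(4)[OF Z prod(1)] by blast
      have "g \<in> G"
        unfolding G_def
      proof (intro CollectI conjI bexI[of _ "g \<odot>\<^bsub>M\<^esub> m0"] ballI)
        show "g \<in> carrier R" by fact
        show "g \<odot>\<^bsub>M\<^esub> m0 \<in> carrier M" using g(1) m0(1) by simp
        fix t assume t: "t \<in> I"
        have tc: "t \<in> carrier R" using Icarr[OF t] .
        have "t \<otimes> r \<in> PIdl c" using ideal_prod.prod[OF t prod(2)] cQ(4) by blast
        then obtain q where q: "q \<in> carrier R" "t \<otimes> r = q \<otimes> c" unfolding cgenideal_def by blast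
        have "c \<otimes> (g \<otimes> t) = (t0 \<otimes> r) \<otimes> t" using g' g(1) tc cQ(1) by (simp add: m_assoc)
        also have "\<dots> = t0 \<otimes> (t \<otimes> r)" using t0c rc tc by (simp add: m_ac)
        also have "\<dots> = c \<otimes> (q \<otimes> t0)" using q t0c cQ(1) by (simp add: m_ac)
        finally have gt: "g \<otimes> t = q \<otimes> t0"
          using m_lcancel[OF cQ(2) cQ(1)] g(1) tc q(1) t0c by simp
        have "g \<odot>\<^bsub>M\<^esub> \<phi> t = \<phi> (g \<otimes> t)" using ZD(3)[OF Z g(1) t] by simp
        also have "\<dots> = \<phi> (q \<otimes> t0)" using gt by simp
        also have "\<dots> = q \<odot>\<^bsub>M\<^esub> (t0 \<odot>\<^bsub>M\<^esub> m0)" using ZD(3)[OF Z q(1) prod(1)] m0(2) by simp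
        also have "\<dots> = (q \<otimes> t0) \<odot>\<^bsub>M\<^esub> m0" using q(1) t0c m0(1) by (simp add: smult_assoc1)
        also have "\<dots> = (t \<otimes> g) \<odot>\<^bsub>M\<^esub> m0" using gt m_comm[OF g(1) tc] by simp
        also have "\<dots> = t \<odot>\<^bsub>M\<^esub> (g \<odot>\<^bsub>M\<^esub> m0)" using tc g(1) m0(1) by (simp add: smult_assoc1)
        finally show "g \<odot>\<^bsub>M\<^esub> \<phi> t = t \<odot>\<^bsub>M\<^esub> (g \<odot>\<^bsub>M\<^esub> m0)" .
      qed
      thus ?case using g' by blast
    next
      case (sum s1 s2)
      then obtain g1 g2 where g: "g1 \<in> G" "s1 = c \<otimes> g1" "g2 \<in> G" "s2 = c \<otimes> g2" by blast
      obtain m1 where m1: "m1 \<in> carrier M" "\<forall>t\<in>I. g1 \<odot>\<^bsub>M\<^esub> \<phi> t = t \<odot>\<^bsub>M\<^esub> m1" using g(1) G_def by blast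
      obtain m2 where m2: "m2 \<in> carrier M" "\<forall>t\<in>I. g2 \<odot>\<^bsub>M\<^esub> \<phi> t = t \<odot>\<^bsub>M\<^esub> m2" using g(3) G_def by blast
      have gc: "g1 \<in> carrier R" "g2 \<in> carrier R" using g(1,3) G_def by auto
      have "g1 \<oplus> g2 \<in> G"
        unfolding G_def
      proof (intro CollectI conjI bexI[of _ "m1 \<oplus>\<^bsub>M\<^esub> m2"] ballI)
        show "g1 \<oplus> g2 \<in> carrier R" using gc by simp
        show "m1 \<oplus>\<^bsub>M\<^esub> m2 \<in> carrier M" using m1(1) m2(1) by simp
        fix t assume t: "t \<in> I"
        have tc: "t \<in> carrier R" using Icarr[OF t] .
        have "(g1 \<oplus> g2) \<odot>\<^bsub>M\<^esub> \<phi> t = g1 \<odot>\<^bsub>M\<^esub> \<phi> t \<oplus>\<^bsub>M\<^esub> g2 \<odot>\<^bsub>M\<^esub> \<phi> t"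
          using smult_l_distr gc ZD(1)[OF Z t] by simp
        also have "\<dots> = t \<odot>\<^bsub>M\<^esub> m1 \<oplus>\<^bsub>M\<^esub> t \<odot>\<^bsub>M\<^esub> m2" using m1(2) m2(2) t by simp
        also have "\<dots> = t \<odot>\<^bsub>M\<^esub> (m1 \<oplus>\<^bsub>M\<^esub> m2)" using smult_r_distr tc m1(1) m2(1) by simp
        finally show "(g1 \<oplus> g2) \<odot>\<^bsub>M\<^esub> \<phi> t = t \<odot>\<^bsub>M\<^esub> (m1 \<oplus>\<^bsub>M\<^esub> m2)" .
      qed
      moreover have "s1 \<oplus> s2 = c \<otimes> (g1 \<oplus> g2)" using g(2,4) gc cQ(1) by (simp add: r_distr)
      ultimately show ?case by blast
    qed
    have "c \<in> I \<cdot> Q" using cQ(4) cgenideal_self[OF cQ(1)] by simp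
    then obtain g where g: "g \<in> G" "c = c \<otimes> g" using key by blast
    have gc: "g \<in> carrier R" using g(1) G_def by auto
    have "c \<otimes> \<one> = c \<otimes> g" using g(2) cQ(1) by simp
    hence "g = \<one>" using m_lcancel[OF cQ(2) cQ(1) one_closed gc] by simp
    then obtain m where m: "m \<in> carrier M" "\<forall>t\<in>I. \<one> \<odot>\<^bsub>M\<^esub> \<phi> t = t \<odot>\<^bsub>M\<^esub> m"
      using g(1) G_def by blast
    show ?thesis
    proof (intro bexI[OF _ m(1)] ballI)
      fix t assume t: "t \<in> I"
      hence "\<one> \<odot>\<^bsub>M\<^esub> \<phi> t = t \<odot>\<^bsub>M\<^esub> m" using m(2) by blast
      thus "\<phi> t = t \<odot>\<^bsub>M\<^esub> m" using smult_one[OF ZD(1)[OF Z t]] by simp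
    qed
  qed
qed


theorem proposition5p6:
  fixes R :: "'a ring" and I :: "'a set" and M :: "('a, 'b) module"
  assumes "cring R" and "ideal I R" and "module R M"
  shows "(principalideal I R \<longrightarrow> H_R_zero R I M)
       \<and> (domain R \<and> torsion_free R M \<longrightarrow> H_R_zero R I M)
       \<and> (dedekind_domain R \<longrightarrow> H_R_zero R I M)
       \<and> (reduced_ring R \<and> finite {P. minimal_prime P R} \<longrightarrow> H_R_zero R I (self_module R))"
proof (intro conjI impI)
  assume "principalideal I R"
  thus "H_R_zero R I M" using part1[OF assms(1,3)] by blast
next
  assume "domain R \<and> torsion_free R M"
  thus "H_R_zero R I M" using part2[OF _ assms(3,2)] by blast
next
  assume "dedekind_domain R"
  thus "H_R_zero R I M" using part3[OF _ assms(3,2)] by blast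
next
  assume "reduced_ring R \<and> finite {P. minimal_prime P R}"
  thus "H_R_zero R I (self_module R)" using part4[OF assms(1,2)] by blast
qed

end
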